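(* Let $(A,\succ,\prec)$ be an anti-pre-Novikov algebra and $\omega$ a non-degenerate bilinear form on $A$. Let $\omega^\sharp:A\to A^*$ be given by $\langle\omega^\sharp(x),y\rangle=\omega(x,y)$ and let $s_\omega\in A\otimes A$ be the element with $T_{s_\omega}=(\omega^\sharp)^{-1}$. Then $(A,\succ,\prec,\omega)$ is a quadratic anti-pre-Novikov algebra if and only if $s_\omega$ is symmetric and invariant.
   Context: $A$ is finite-dimensional over a field $k$. An anti-pre-Novikov algebra is $(A,\succ,\prec)$ such that with $x\circ y=x\succ y+x\prec y$: $(x\circ y-y\circ x)\succ z=y\succ(x\succ z)-x\succ(y\succ z)$; $x\prec(y\circ z)=(y\succ x)\prec z-(x\prec y)\prec z-y\succ(x\prec z)$; $(x\circ y)\succ z=-(x\succ z)\prec y$; $(x\prec y)\prec z=(x\prec z)\prec y$; $(x\circ y-y\circ x)\prec z=x\succ(y\circ z)-y\succ(x\circ z)$. It is quadratic with respect to $\omega$ if $\omega$ is non-degenerate, symmetric, and $\omega(x\prec y,z)=-\omega(x,z\circ y)$, $\omega(x\succ y,z)=\omega(x\circ z+z\circ x,y)$ for all $x,y,z$. For $r\in A\otimes A$, $T_r:A^*\to A$ is $\langle T_r(\zeta),\eta\rangle=\langle r,\zeta\otimes\eta\rangle$; $r$ is symmetric if $\tau(r)=r$ ($\tau$ the flip). With $L_\ast(x)y=x\ast y$, $R_\ast(x)y=y\ast x$, $x\odot y=x\succ y+y\prec x$, $L_{\star}=L_{\circ}+R_{\circ}$, $L_{\odot}=L_{\succ}+R_{\prec}$: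 $r$ is invariant if $(I\otimes L_{\star}(x)-L_{\succ}(x)\otimes I)r=0$ and $(L_{\circ}(x)\otimes I-I\otimes L_{\odot}(x))r=0$ for all $x\in A$. *)

theory Defs
  imports Main
begin

text \<open>Coordinatisation: the finite-dimensional vector space A over the field 'k is
  modelled as 'n \<Rightarrow> 'k for a finite index type 'n (a basis of A).
  The dual space A* is modelled as 'n \<Rightarrow> 'k via the dual basis, and
  A \<otimes> A as coefficient arrays 'n \<Rightarrow> 'n \<Rightarrow> 'k (r = sum r i j e_i \<otimes> e_j).\<close>

type_synonym ('k, 'n) vect = "'n \<Rightarrow> 'k"

definition vadd :: "('k::field, 'n) vect \<Rightarrow> ('k, 'n) vect \<Rightarrow> ('k, 'n) vect" where
  "vadd x y = (\<lambda>i. x i + y i)"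
definition vsub :: "('k::field, 'n) vect \<Rightarrow> ('k, 'n) vect \<Rightarrow> ('k, 'n) vect" where
  "vsub x y = (\<lambda>i. x i - y i)"
definition vneg :: "('k::field, 'n) vect \<Rightarrow> ('k, 'n) vect" where
  "vneg x = (\<lambda>i. - x i)"
definition vsmul :: "'k::field \<Rightarrow> ('k, 'n) vect \<Rightarrow> ('k, 'n) vect" where
  "vsmul a x = (\<lambda>i. a * x i)"
definition vzero :: "('k::field, 'n) vect" where
  "vzero = (\<lambda>i. 0)"
definition basis_vec :: "'n \<Rightarrow> ('k::field, 'n) vect" where
  "basis_vec j = (\<lambda>i. if i = j then 1 else 0)"

definition bilinear_op :: "(('k::field, 'n) vect \<Rightarrow> ('k, 'n) vect \<Rightarrow> ('k, 'n) vect) \<Rightarrow> bool" where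
  "bilinear_op m \<longleftrightarrow>
     (\<forall>x y z. m (vadd x y) z = vadd (m x z) (m y z)) \<and>
     (\<forall>x y z. m x (vadd y z) = vadd (m x y) (m x z)) \<and>
     (\<forall>a x y. m (vsmul a x) y = vsmul a (m x y)) \<and>
     (\<forall>a x y. m x (vsmul a y) = vsmul a (m x y))"

definition bilinear_form :: "(('k::field, 'n) vect \<Rightarrow> ('k, 'n) vect \<Rightarrow> 'k) \<Rightarrow> bool" where
  "bilinear_form w \<longleftrightarrow>
     (\<forall>x y z. w (vadd x y) z = w x z + w y z) \<and>
     (\<forall>x y z. w x (vadd y z) = w x y + w x z) \<and>
     (\<forall>a x y. w (vsmul a x) y = a * w x y) \<and>
     (\<forall>a x y. w x (vsmul a y) = a * w x y)"

definition nondegenerate :: "(('k::field, 'n) vect \<Rightarrow> ('k, 'n) vect \<Rightarrow> 'k) \<Rightarrow> bool" where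
  "nondegenerate w \<longleftrightarrow> (\<forall>x. (\<forall>y. w x y = 0) \<longrightarrow> x = vzero)"

definition symmetric_form :: "(('k::field, 'n) vect \<Rightarrow> ('k, 'n) vect \<Rightarrow> 'k) \<Rightarrow> bool" where
  "symmetric_form w \<longleftrightarrow> (\<forall>x y. w x y = w y x)"

definition circ_op where
  "circ_op succ prec x y = vadd (succ x y) (prec x y)"

definition anti_pre_Novikov ::
  "(('k::field, 'n) vect \<Rightarrow> ('k, 'n) vect \<Rightarrow> ('k, 'n) vect) \<Rightarrow>
   (('k, 'n) vect \<Rightarrow> ('k, 'n) vect \<Rightarrow> ('k, 'n) vect) \<Rightarrow> bool" where
  "anti_pre_Novikov succ prec \<longleftrightarrow>
     bilinear_op succ \<and> bilinear_op prec \<and>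
     (let cc = circ_op succ prec in
     (\<forall>x y z. succ (vsub (cc x y) (cc y x)) z = vsub (succ y (succ x z)) (succ x (succ y z))) \<and>
     (\<forall>x y z. prec x (cc y z) =
               vsub (vsub (prec (succ y x) z) (prec (prec x y) z)) (succ y (prec x z))) \<and>
     (\<forall>x y z. succ (cc x y) z = vneg (prec (succ x z) y)) \<and>
     (\<forall>x y z. prec (prec x y) z = prec (prec x z) y) \<and>
     (\<forall>x y z. prec (vsub (cc x y) (cc y x)) z = vsub (succ x (cc y z)) (succ y (cc x z))))"

definition quadratic_apN where
  "quadratic_apN succ prec w \<longleftrightarrow>
     anti_pre_Novikov succ prec \<and> nondegenerate w \<and> symmetric_form w \<and>
     (\<forall>x y z. w (prec x y) z = - w x (circ_op succ prec z y)) \<and>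
     (\<forall>x y z. w (succ x y) z = w (vadd (circ_op succ prec x z) (circ_op succ prec z x)) y)"

definition pairing :: "('k::field, 'n::finite) vect \<Rightarrow> ('k, 'n) vect \<Rightarrow> 'k" where
  "pairing \<zeta> x = (\<Sum>i\<in>UNIV. \<zeta> i * x i)"

text \<open>T_r : A* \<rightarrow> A, with \<langle>T_r \<zeta>, \<eta>\<rangle> = \<langle>r, \<zeta> \<otimes> \<eta>\<rangle> = sum r i j \<zeta> i \<eta> j.\<close>
definition T_map :: "('n::finite \<Rightarrow> 'n \<Rightarrow> 'k::field) \<Rightarrow> ('k, 'n) vect \<Rightarrow> ('k, 'n) vect" where
  "T_map r \<zeta> = (\<lambda>j. \<Sum>i\<in>UNIV. \<zeta> i * r i j)"

definition omega_sharp :: "(('k::field, 'n::finite) vect \<Rightarrow> ('k, 'n) vect \<Rightarrow> 'k) \<Rightarrow> ('k, 'n) vect \<Rightarrow> ('k, 'n) vect" where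
  "omega_sharp w x = (\<lambda>j. w x (basis_vec j))"

definition symmetric_tensor :: "('n \<Rightarrow> 'n \<Rightarrow> 'k) \<Rightarrow> bool" where
  "symmetric_tensor r \<longleftrightarrow> (\<forall>i j. r i j = r j i)"

definition tensor_map ::
  "(('k::field, 'n::finite) vect \<Rightarrow> ('k, 'n) vect) \<Rightarrow> (('k, 'n) vect \<Rightarrow> ('k, 'n) vect) \<Rightarrow>
   ('n \<Rightarrow> 'n \<Rightarrow> 'k) \<Rightarrow> ('n \<Rightarrow> 'n \<Rightarrow> 'k)" where
  "tensor_map f g r = (\<lambda>a b. \<Sum>i\<in>UNIV. \<Sum>j\<in>UNIV. r i j * f (basis_vec i) a * g (basis_vec j) b)"

definition invariant_tensor where
  "invariant_tensor succ prec r \<longleftrightarrow>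
     (\<forall>x. tensor_map id (\<lambda>y. vadd (circ_op succ prec x y) (circ_op succ prec y x)) r
          = tensor_map (\<lambda>y. succ x y) id r) \<and>
     (\<forall>x. tensor_map (\<lambda>y. circ_op succ prec x y) id r
          = tensor_map id (\<lambda>y. vadd (succ x y) (prec y x)) r)"

end

theory Submission
  imports Defs
begin

definition linmap :: "(('k::field, 'n) vect \<Rightarrow> ('k, 'n) vect) \<Rightarrow> bool" where
  "linmap f \<longleftrightarrow> (\<forall>x y. f (vadd x y) = vadd (f x) (f y)) \<and> (\<forall>a x. f (vsmul a x) = vsmul a (f x))"

definition linfun :: "(('k::field, 'n) vect \<Rightarrow> 'k) \<Rightarrow> bool" where
  "linfun f \<longleftrightarrow> (\<forall>x y. f (vadd x y) = f x + f y) \<and> (\<forall>a x. f (vsmul a x) = a * f x)"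

lemma linmap_expand:
  assumes "linmap f" "finite A"
  shows "f (\<lambda>k. \<Sum>i\<in>A. c i * v i k) = (\<lambda>k. \<Sum>i\<in>A. c i * f (v i) k)"
  using assms(2)
proof (induction A rule: finite_induct)
  case empty
  have "f (\<lambda>k. 0) = f (vsmul 0 (\<lambda>k. 0))" by (simp add: vsmul_def)
  also have "\<dots> = vsmul 0 (f (\<lambda>k. 0))" using assms(1) by (simp add: linmap_def)
  finally show ?case by (simp add: vsmul_def)
next
  case (insert i A)
  have "(\<lambda>k. \<Sum>j\<in>insert i A. c j * v j k) = vadd (vsmul (c i) (v i)) (\<lambda>k. \<Sum>j\<in>A. c j * v j k)"
    using insert by (simp add: vadd_def vsmul_def)
  then show ?case using insert assms(1) by (simp add: linmap_def vadd_def vsmul_def)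
qed

lemma linfun_expand:
  assumes "linfun f" "finite A"
  shows "f (\<lambda>k. \<Sum>i\<in>A. c i * v i k) = (\<Sum>i\<in>A. c i * f (v i))"
  using assms(2)
proof (induction A rule: finite_induct)
  case empty
  have "f (\<lambda>k. 0) = f (vsmul 0 (\<lambda>k. 0))" by (simp add: vsmul_def)
  also have "\<dots> = 0 * (f (\<lambda>k. 0))" using assms(1) by (simp add: linfun_def)
  finally show ?case by simp
next
  case (insert i A)
  have "(\<lambda>k. \<Sum>j\<in>insert i A. c j * v j k) = vadd (vsmul (c i) (v i)) (\<lambda>k. \<Sum>j\<in>A. c j * v j k)"
    using insert by (simp add: vadd_def vsmul_def)
  then show ?case using insert assms(1) by (simp add: linfun_def)
qed

lemma vec_basis: "(x::('k::field,'n::finite) vect) = (\<lambda>k. \<Sum>i\<in>UNIV. x i * basis_vec i k)"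
  by (simp add: basis_vec_def if_distrib cong: if_cong)

lemma linfun_w2: "bilinear_form w \<Longrightarrow> linfun (w u)"
  by (simp add: bilinear_form_def linfun_def)
lemma linfun_w1: "bilinear_form w \<Longrightarrow> linfun (\<lambda>u. w u v)"
  by (simp add: bilinear_form_def linfun_def)

lemma W2:
  fixes w :: "('k::field, 'n::finite) vect \<Rightarrow> ('k, 'n) vect \<Rightarrow> 'k"
  assumes "bilinear_form w"
  shows "w x y = (\<Sum>j\<in>UNIV. y j * omega_sharp w x j)"
proof -
  have "w x y = w x (\<lambda>k. \<Sum>i\<in>UNIV. y i * basis_vec i k)" using vec_basis[of y] by simp
  also have "\<dots> = (\<Sum>i\<in>UNIV. y i * w x (basis_vec i))"
    by (rule linfun_expand[OF linfun_w2[OF assms]]) simp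
  finally show ?thesis by (simp add: omega_sharp_def)
qed

lemma ifmul: "(if P then 1 else 0) * (x::'a::field) = (if P then x else 0)"
  "x * (if P then 1 else 0) = (if P then x else 0)" by simp_all

lemma ifmul0: "(if P then x else 0) * (y::'a::field) = (if P then x * y else 0)" by simp

lemma linfun_comp: "linfun p \<Longrightarrow> linmap f \<Longrightarrow> linfun (\<lambda>v. p (f v))"
  by (simp add: linfun_def linmap_def)

lemma linfun_coord: "linfun (\<lambda>u. u b)"
  by (simp add: linfun_def vadd_def vsmul_def)

lemma coord:
  fixes w :: "('k::field, 'n::finite) vect \<Rightarrow> ('k, 'n) vect \<Rightarrow> 'k"
  assumes "bilinear_form w" "\<forall>\<zeta>. omega_sharp w (T_map s \<zeta>) = \<zeta>"
  shows "w (\<lambda>k. s a k) y = y a"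
proof -
  have t: "T_map s (basis_vec a) = (\<lambda>k. s a k)"
    by (simp add: T_map_def basis_vec_def fun_eq_iff ifmul)
  have "omega_sharp w (\<lambda>k. s a k) = basis_vec a" using assms(2) t by metis
  then show ?thesis using W2[OF assms(1)] by (simp add: basis_vec_def ifmul)
qed

lemma agree:
  fixes w :: "('k::field, 'n::finite) vect \<Rightarrow> ('k, 'n) vect \<Rightarrow> 'k"
  assumes "\<forall>x. T_map s (omega_sharp w x) = x" "linfun p" "linfun q"
    "\<And>b. p (\<lambda>k. s b k) = q (\<lambda>k. s b k)"
  shows "p v = q v"
proof -
  have e: "v = (\<lambda>k. \<Sum>i\<in>UNIV. omega_sharp w v i * s i k)"
    using assms(1) unfolding T_map_def by metis
  have "p v = (\<Sum>i\<in>UNIV. omega_sharp w v i * p (\<lambda>k. s i k))"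
    by (subst e, rule linfun_expand[OF assms(2)]) simp
  also have "\<dots> = (\<Sum>i\<in>UNIV. omega_sharp w v i * q (\<lambda>k. s i k))" using assms(4) by simp
  also have "\<dots> = q v"
    by (subst (2) e, rule linfun_expand[OF assms(3), symmetric]) simp
  finally show ?thesis .
qed

lemma symw_syms:
  fixes w :: "('k::field, 'n::finite) vect \<Rightarrow> ('k, 'n) vect \<Rightarrow> 'k"
  assumes "bilinear_form w" "\<forall>\<zeta>. omega_sharp w (T_map s \<zeta>) = \<zeta>" "symmetric_form w"
  shows "symmetric_tensor s"
  unfolding symmetric_tensor_def
proof (intro allI)
  fix a b
  have "s a b = w (\<lambda>k. s b k) (\<lambda>k. s a k)" using coord[OF assms(1,2)] by simp
  also have "\<dots> = w (\<lambda>k. s a k) (\<lambda>k. s b k)" using assms(3) by (simp add: symmetric_form_def)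
  also have "\<dots> = s b a" using coord[OF assms(1,2)] by simp
  finally show "s a b = s b a" .
qed

lemma syms_symw:
  fixes w :: "('k::field, 'n::finite) vect \<Rightarrow> ('k, 'n) vect \<Rightarrow> 'k"
  assumes "bilinear_form w" "\<forall>\<zeta>. omega_sharp w (T_map s \<zeta>) = \<zeta>"
    "\<forall>x. T_map s (omega_sharp w x) = x" "symmetric_tensor s"
  shows "symmetric_form w"
  unfolding symmetric_form_def
proof (intro allI)
  fix u v
  have "w u (\<lambda>k. s b k) = w (\<lambda>k. s b k) u" for b
  proof (rule agree[OF assms(3) linfun_w1[OF assms(1)]])
    show "linfun (\<lambda>u. w (\<lambda>k. s b k) u)" by (rule linfun_w2[OF assms(1)])
    fix a
    show "w (\<lambda>k. s a k) (\<lambda>k. s b k) = w (\<lambda>k. s b k) (\<lambda>k. s a k)"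
      using coord[OF assms(1,2)] assms(4) unfolding symmetric_tensor_def by metis
  qed
  then show "w u v = w v u"
    by (rule agree[OF assms(3) linfun_w2[OF assms(1)] linfun_w1[OF assms(1)]])
qed

lemma TM1:
  fixes f :: "('k::field, 'n::finite) vect \<Rightarrow> ('k, 'n) vect"
  assumes "linmap f" "symmetric_tensor s"
  shows "tensor_map f id s a b = f (\<lambda>k. s b k) a"
proof -
  have "tensor_map f id s a b = (\<Sum>i\<in>UNIV. s i b * f (basis_vec i) a)"
    by (simp add: tensor_map_def basis_vec_def ifmul)
  also have "\<dots> = (\<Sum>i\<in>UNIV. s b i * f (basis_vec i) a)"
    by (rule sum.cong[OF refl]) (use assms(2) in \<open>unfold symmetric_tensor_def, metis\<close>)
  also have "\<dots> = f (\<lambda>k. \<Sum>i\<in>UNIV. s b i * basis_vec i k) a"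
    using fun_cong[OF linmap_expand[OF assms(1) finite_UNIV, of "s b" basis_vec]] by simp
  also have "(\<lambda>k. \<Sum>i\<in>UNIV. s b i * basis_vec i k) = (\<lambda>k. s b k)"
    by (rule vec_basis[of "s b", symmetric])
  finally show ?thesis .
qed

lemma TM2:
  fixes g :: "('k::field, 'n::finite) vect \<Rightarrow> ('k, 'n) vect"
  assumes "linmap g"
  shows "tensor_map id g s a b = g (\<lambda>k. s a k) b"
proof -
  have "tensor_map id g s a b = (\<Sum>i\<in>UNIV. \<Sum>j\<in>UNIV. (if a = i then s i j * g (basis_vec j) b else 0))"
    unfolding tensor_map_def by (simp add: basis_vec_def ifmul ifmul0 cong del: if_weak_cong)
  also have "\<dots> = (\<Sum>i\<in>UNIV. s a i * g (basis_vec i) b)"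
  proof -
    have "\<And>i. (\<Sum>j\<in>UNIV. (if a = i then s i j * g (basis_vec j) b else 0))
       = (if a = i then (\<Sum>j\<in>UNIV. s i j * g (basis_vec j) b) else 0)" by simp
    then show ?thesis by simp
  qed
  also have "\<dots> = g (\<lambda>k. \<Sum>i\<in>UNIV. s a i * basis_vec i k) b"
    using fun_cong[OF linmap_expand[OF assms(1) finite_UNIV, of "s a" basis_vec]] by simp
  also have "(\<lambda>k. \<Sum>i\<in>UNIV. s a i * basis_vec i k) = (\<lambda>k. s a k)"
    by (rule vec_basis[of "s a", symmetric])
  finally show ?thesis .
qed

lemma key:
  fixes w :: "('k::field, 'n::finite) vect \<Rightarrow> ('k, 'n) vect \<Rightarrow> 'k"
  assumes bw: "bilinear_form w" and h1: "\<forall>\<zeta>. omega_sharp w (T_map s \<zeta>) = \<zeta>"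
    and h2: "\<forall>x. T_map s (omega_sharp w x) = x" and ss: "symmetric_tensor s"
    and sw: "symmetric_form w" and lf: "linmap f" and lg: "linmap g"
  shows "tensor_map f id s = tensor_map id g s \<longleftrightarrow> (\<forall>u v. w u (f v) = w (g u) v)"
proof -
  have A: "w (s a) (f (s b)) = tensor_map f id s a b" for a b
  proof -
    have "w (s a) (f (s b)) = f (s b) a" using coord[OF bw h1, of a "f (s b)"] by simp
    also have "\<dots> = tensor_map f id s a b" using TM1[OF lf ss, of a b] by simp
    finally show ?thesis .
  qed
  have B: "w (g (s a)) (s b) = tensor_map id g s a b" for a b
  proof -
    have "w (g (s a)) (s b) = w (s b) (g (s a))" using sw unfolding symmetric_form_def by blast
    also have "\<dots> = g (s a) b" using coord[OF bw h1, of b "g (s a)"] by simp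
    also have "\<dots> = tensor_map id g s a b" using TM2[OF lg, of s a b] by simp
    finally show ?thesis .
  qed
  have C: "tensor_map f id s = tensor_map id g s \<longleftrightarrow>
     (\<forall>a b. w (s a) (f (s b)) = w (g (s a)) (s b))"
    by (simp only: fun_eq_iff A B)
  have D: "(\<forall>a b. w (s a) (f (s b)) = w (g (s a)) (s b)) \<longleftrightarrow> (\<forall>u v. w u (f v) = w (g u) v)"
  proof
    assume H: "\<forall>a b. w (s a) (f (s b)) = w (g (s a)) (s b)"
    show "\<forall>u v. w u (f v) = w (g u) v"
    proof (intro allI)
      fix u v
      have E: "w u (f (s b)) = w (g u) (s b)" for b
      proof (rule agree[where p="\<lambda>u. w u (f (s b))" and q="\<lambda>u. w (g u) (s b)", OF h2])
        show "linfun (\<lambda>u. w u (f (s b)))" by (rule linfun_w1[OF bw])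
        show "linfun (\<lambda>u. w (g u) (s b))" by (rule linfun_comp[OF linfun_w1[OF bw] lg])
        fix a show "w (s a) (f (s b)) = w (g (s a)) (s b)" using H by blast
      qed
      show "w u (f v) = w (g u) v"
      proof (rule agree[where p="\<lambda>v. w u (f v)" and q="\<lambda>v. w (g u) v", OF h2])
        show "linfun (\<lambda>v. w u (f v))" by (rule linfun_comp[OF linfun_w2[OF bw] lf])
        show "linfun (\<lambda>v. w (g u) v)" by (rule linfun_w2[OF bw])
        fix b show "w u (f (s b)) = w (g u) (s b)" by (rule E)
      qed
    qed
  qed blast
  show ?thesis using C D by blast
qed

lemma linmap_l: "bilinear_op m \<Longrightarrow> linmap (m x)"
  by (simp add: bilinear_op_def linmap_def)
lemma linmap_r: "bilinear_op m \<Longrightarrow> linmap (\<lambda>y. m y x)"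
  by (simp add: bilinear_op_def linmap_def)
lemma linmap_add: "linmap f \<Longrightarrow> linmap g \<Longrightarrow> linmap (\<lambda>y. vadd (f y) (g y))"
  by (simp add: linmap_def vadd_def vsmul_def fun_eq_iff algebra_simps)

lemma arith3: "((a::'a::field) = a + b + c) \<longleftrightarrow> (c = - b)"
  by (metis add.assoc add_cancel_left_right add_eq_0_iff)

theorem mainTheorem14:
  fixes succ prec :: "('k::field, 'n::finite) vect \<Rightarrow> ('k, 'n) vect \<Rightarrow> ('k, 'n) vect"
    and w :: "('k, 'n) vect \<Rightarrow> ('k, 'n) vect \<Rightarrow> 'k"
    and s :: "'n \<Rightarrow> 'n \<Rightarrow> 'k"
  assumes "anti_pre_Novikov succ prec"
    and "bilinear_form w"
    and "nondegenerate w"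
    and "\<forall>\<zeta>. omega_sharp w (T_map s \<zeta>) = \<zeta>"
    and "\<forall>x. T_map s (omega_sharp w x) = x"
  shows "quadratic_apN succ prec w \<longleftrightarrow> symmetric_tensor s \<and> invariant_tensor succ prec s"
proof -
  note bw = assms(2) and h1 = assms(4) and h2 = assms(5)
  have bs: "bilinear_op succ" and bp: "bilinear_op prec" using assms(1) by (simp_all add: anti_pre_Novikov_def)
  define cc where "cc = circ_op succ prec"
  have ccx: "cc x = (\<lambda>y. vadd (succ x y) (prec x y))" for x by (simp add: cc_def circ_op_def fun_eq_iff)
  have lcc: "linmap (cc x)" for x unfolding ccx by (rule linmap_add[OF linmap_l[OF bs] linmap_l[OF bp]])
  have lccr: "linmap (\<lambda>y. cc y x)" for x unfolding ccx by (rule linmap_add[OF linmap_r[OF bs] linmap_r[OF bp]])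
  have lstar: "linmap (\<lambda>y. vadd (cc x y) (cc y x))" for x by (rule linmap_add[OF lcc lccr])
  have lodot: "linmap (\<lambda>y. vadd (succ x y) (prec y x))" for x by (rule linmap_add[OF linmap_l[OF bs] linmap_r[OF bp]])
  have wadd: "w (vadd a b) c = w a c + w b c" for a b c using bw by (simp add: bilinear_form_def)
  have Q: "quadratic_apN succ prec w \<longleftrightarrow> symmetric_form w \<and>
     (\<forall>x y z. w (prec x y) z = - w x (cc z y)) \<and>
     (\<forall>x y z. w (succ x y) z = w (vadd (cc x z) (cc z x)) y)"
    using assms(1,3) by (simp add: quadratic_apN_def cc_def)
  have I: "invariant_tensor succ prec s \<longleftrightarrow>
     (\<forall>x. tensor_map (succ x) id s = tensor_map id (\<lambda>y. vadd (cc x y) (cc y x)) s) \<and>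
     (\<forall>x. tensor_map (cc x) id s = tensor_map id (\<lambda>y. vadd (succ x y) (prec y x)) s)"
    unfolding invariant_tensor_def cc_def by (auto simp: eta_contract_eq)
  have S: "symmetric_form w \<longleftrightarrow> symmetric_tensor s"
    using symw_syms[OF bw h1] syms_symw[OF bw h1 h2] by blast
  show ?thesis
  proof (cases "symmetric_form w")
    case False then show ?thesis using Q S by blast
  next
    case True
    then have ss: "symmetric_tensor s" using S by blast
    have sw: "w a b = w b a" for a b using True by (simp add: symmetric_form_def)
    have K1: "(\<forall>x. tensor_map (succ x) id s = tensor_map id (\<lambda>y. vadd (cc x y) (cc y x)) s) \<longleftrightarrow>
      (\<forall>x u v. w u (succ x v) = w (vadd (cc x u) (cc u x)) v)"
      using key[OF bw h1 h2 ss True linmap_l[OF bs] lstar] by blast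
    have K2: "(\<forall>x. tensor_map (cc x) id s = tensor_map id (\<lambda>y. vadd (succ x y) (prec y x)) s) \<longleftrightarrow>
      (\<forall>x u v. w u (cc x v) = w (vadd (succ x u) (prec u x)) v)"
      using key[OF bw h1 h2 ss True lcc lodot] by blast
    have E1: "(\<forall>x u v. w u (succ x v) = w (vadd (cc x u) (cc u x)) v) \<longleftrightarrow>
       (\<forall>x y z. w (succ x y) z = w (vadd (cc x z) (cc z x)) y)"
    proof (intro iffI allI)
      fix x y z
      assume H: "\<forall>x u v. w u (succ x v) = w (vadd (cc x u) (cc u x)) v"
      have "w z (succ x y) = w (vadd (cc x z) (cc z x)) y" using H by blast
      then show "w (succ x y) z = w (vadd (cc x z) (cc z x)) y" using sw[of z "succ x y"] by simp
    next
      fix x u v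
      assume H: "\<forall>x y z. w (succ x y) z = w (vadd (cc x z) (cc z x)) y"
      have "w (succ x v) u = w (vadd (cc x u) (cc u x)) v" using H by blast
      then show "w u (succ x v) = w (vadd (cc x u) (cc u x)) v" using sw[of u "succ x v"] by simp
    qed
    have E2: "(\<forall>x u v. w u (cc x v) = w (vadd (succ x u) (prec u x)) v) \<longleftrightarrow>
       (\<forall>x y z. w (prec x y) z = - w x (cc z y))"
      if P2: "\<forall>x y z. w (succ x y) z = w (vadd (cc x z) (cc z x)) y"
    proof -
      have "w u (cc x v) = w (vadd (succ x u) (prec u x)) v \<longleftrightarrow> w (prec u x) v = - w u (cc v x)"
        for x u v
      proof -
        have "w (vadd (succ x u) (prec u x)) v = w (cc x v) u + w (cc v x) u + w (prec u x) v"
          using P2 wadd by simp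
        moreover have "w u (cc x v) = w (cc x v) u" "w u (cc v x) = w (cc v x) u" using sw by blast+
        ultimately show ?thesis using arith3 by simp
      qed
      then show ?thesis by blast
    qed
    show ?thesis using Q S I K1 K2 E1 E2 True ss by blast
  qed
qed

end
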